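(* Let $\mathcal{L}_{\mathrm{all}}$ be the family of all PLDs and let $\mathcal{L}_{ED}:=\{L_{\varepsilon,\delta}:\varepsilon\ge0,\ \delta\in[0,1]\}$. For neither $\mathcal{L}=\mathcal{L}_{\mathrm{all}}$ nor $\mathcal{L}=\mathcal{L}_{ED}$ is the natural filter with queries in $\mathcal{L}$ free for every budget $B$ and every capacity $k$; i.e., in each case there exist a PLD $B$ and $k\ge1$ with $\mathrm{PLD}(\mathrm{Filter}_{\mathcal{L},B,k})\not\preceq B$.
   Context: Fix a pair of datasets $D_1,D_2$; mechanisms are randomized maps from datasets to outputs, adaptive mechanisms also take previous outputs. A PLD is the law of $\log\frac{dP}{dQ}(\omega)$, $\omega\sim P$, for distributions $P,Q$ on a common space (values in $\mathbb{R}\cup\{\infty\}$); $\mathrm{PLD}(M):=\mathrm{PLD}(M(D_1)\|M(D_2))$. Blackwell order $\preceq$ on PLDs: $L\preceq L'$ iff realizing pairs satisfy $P=\phi P'$, $Q=\phi Q'$ for a Markov kernel $\phi$. $\oplus$ is convolution, $\mathrm{Id}$ the point mass at $0$, $\sup$ the least upper bound. The tradeoff curve of a PLD (of a pair $(P,Q)$) is $\tau(\alpha)=\inf\{\beta_\phi:\alpha_\phi\le\alpha\}$ over tests, with Type I error $\alpha_\phi$ under $P$ and Type II error $\beta_\phi$ under $Q$; a PLD is determined by its tradeoff curve. $L_{\varepsilon,\delta}$ denotes the PLD whose tradeoff curve is $f_{\varepsilon,\delta}(\alpha)=\max\{0,\ 1-\delta-e^{\varepsilon}\alpha,\ e^{-\varepsilon}(1-\delta-\alpha)\}$.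 Adaptive composition $M_1\otimes M_2$ outputs $(Y_1,Y_2)$, $Y_1\sim M_1(D)$, $Y_2\sim M_2(D;Y_1)$. A privacy rule of length $k$ maps each sequence $(L_1,\dots,L_{k'})$, $0\le k'<k$, to a set of PLDs containing $\mathrm{Id}$; a $\Gamma$-adversary is $M_1\otimes\cdots\otimes M_k$ with $\mathrm{PLD}(M_i(\cdot;y_1,\dots,y_{i-1}))\in\Gamma(L_1,\dots,L_{i-1})$ for every history; $\mathrm{PLD}(\Gamma)$ is the sup of PLDs of $\Gamma$-adversaries. $\mathrm{Filter}_{\mathcal{L},B,k}(L_1,\dots,L_{k'}):=\{L\in\mathcal{L}:L_1\oplus\cdots\oplus L_{k'}\oplus L\preceq B\}$; the natural filter is free for $(\mathcal{L},B,k)$ if $\mathrm{PLD}(\mathrm{Filter}_{\mathcal{L},B,k})\preceq B$. *)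

theory Defs
  imports "HOL-Probability.Probability"
begin

text \<open>
  Datasets D1, D2 are fixed and encoded by a boolean flag
  (True = D1, False = D2).  A PLD is represented by a realizing pair (P, Q) of
  probability measures on a common measurable space; the PLD of a mechanism M
  is represented by the pair (M(D1), M(D2)).
\<close>

definition valid_pair :: "'a measure \<Rightarrow> 'a measure \<Rightarrow> bool" where
  "valid_pair P Q \<longleftrightarrow> prob_space P \<and> prob_space Q \<and> sets P = sets Q"

definition blackwell_le :: "'a measure \<Rightarrow> 'a measure \<Rightarrow> 'b measure \<Rightarrow> 'b measure \<Rightarrow> bool" where
  "blackwell_le P Q P' Q' \<longleftrightarrow>
     (\<exists>K \<in> P' \<rightarrow>\<^sub>M prob_algebra P. P = P' \<bind> K \<and> Q = Q' \<bind> K)"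

text \<open>Tradeoff curve of (P,Q): tests phi with values in [0,1] (probability of rejecting P);
  Type I error under P is the integral of phi, Type II error under Q the integral of 1 - phi.\<close>
definition tradeoff :: "'a measure \<Rightarrow> 'a measure \<Rightarrow> real \<Rightarrow> real" where
  "tradeoff P Q \<alpha> = Inf {\<beta>. \<exists>\<phi> \<in> borel_measurable P.
        (\<forall>\<omega>\<in>space P. 0 \<le> \<phi> \<omega> \<and> \<phi> \<omega> \<le> 1) \<and>
        (\<integral>\<omega>. \<phi> \<omega> \<partial>P) \<le> \<alpha> \<and> \<beta> = (\<integral>\<omega>. 1 - \<phi> \<omega> \<partial>Q)}"

definition f_eps_delta :: "real \<Rightarrow> real \<Rightarrow> real \<Rightarrow> real" where
  "f_eps_delta \<epsilon> \<delta> \<alpha> = max 0 (max (1 - \<delta> - exp \<epsilon> * \<alpha>) (exp (- \<epsilon>) * (1 - \<delta> - \<alpha>)))"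

definition L_all :: "real measure \<Rightarrow> real measure \<Rightarrow> bool" where
  "L_all P Q \<longleftrightarrow> True"

definition L_ED :: "real measure \<Rightarrow> real measure \<Rightarrow> bool" where
  "L_ED P Q \<longleftrightarrow> (\<exists>\<epsilon> \<delta>. \<epsilon> \<ge> 0 \<and> 0 \<le> \<delta> \<and> \<delta> \<le> 1 \<and>
       (\<forall>\<alpha>\<in>{0..1}. tradeoff P Q \<alpha> = f_eps_delta \<epsilon> \<delta> \<alpha>))"

definition history_space :: "nat \<Rightarrow> (nat \<Rightarrow> real) measure" where
  "history_space i = PiM {..<i} (\<lambda>_. borel)"

text \<open>Joint output law of the adaptive composition M_0 \<otimes> ... \<otimes> M_{i-1} on one dataset;
  A j h is the output distribution of the j-th (adaptive) mechanism given history h.\<close>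
fun joint :: "(nat \<Rightarrow> (nat \<Rightarrow> real) \<Rightarrow> real measure) \<Rightarrow> nat \<Rightarrow> (nat \<Rightarrow> real) measure" where
  "joint A 0 = return (history_space 0) (\<lambda>_. undefined)"
| "joint A (Suc i) = joint A i \<bind> (\<lambda>h. A i h \<bind> (\<lambda>y. return (history_space (Suc i)) (h(i := y))))"

text \<open>Realizing pair of L_0 \<oplus> ... \<oplus> L_i where L_j is the PLD of the j-th mechanism
  along the history h (convolution of PLDs = product of realizing pairs).\<close>
definition step_prod :: "(nat \<Rightarrow> (nat \<Rightarrow> real) \<Rightarrow> real measure) \<Rightarrow> nat \<Rightarrow> (nat \<Rightarrow> real) \<Rightarrow> (nat \<Rightarrow> real) measure" where
  "step_prod A i h = PiM {..i} (\<lambda>j. A j (restrict h {..<j}))"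

text \<open>A Filter_{L,B,k}-adversary: k adaptive mechanisms with real outputs such that, for every
  history, the PLD of the next mechanism lies in L and L_0 \<oplus> ... \<oplus> L_i \<preceq> B.\<close>
definition filter_adversary ::
  "(real measure \<Rightarrow> real measure \<Rightarrow> bool) \<Rightarrow> 'b measure \<Rightarrow> 'b measure \<Rightarrow> nat \<Rightarrow>
   (bool \<Rightarrow> nat \<Rightarrow> (nat \<Rightarrow> real) \<Rightarrow> real measure) \<Rightarrow> bool" where
  "filter_adversary Lmem PB QB k A \<longleftrightarrow>
     (\<forall>d. \<forall>i<k. A d i \<in> history_space i \<rightarrow>\<^sub>M prob_algebra (borel :: real measure)) \<and>
     (\<forall>i<k. \<forall>h\<in>space (history_space i).
        Lmem (A True i h) (A False i h) \<and>
        blackwell_le (step_prod (A True) i h) (step_prod (A False) i h) PB QB)"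

text \<open>The natural filter is free for (L,B,k) iff PLD(Filter_{L,B,k}) \<preceq> B, i.e. (by the least
  upper bound property) iff every Filter-adversary has PLD \<preceq> B.\<close>
definition natural_filter_free ::
  "(real measure \<Rightarrow> real measure \<Rightarrow> bool) \<Rightarrow> 'b measure \<Rightarrow> 'b measure \<Rightarrow> nat \<Rightarrow> bool" where
  "natural_filter_free Lmem PB QB k \<longleftrightarrow>
     (\<forall>A. filter_adversary Lmem PB QB k A \<longrightarrow>
        blackwell_le (joint (A True) k) (joint (A False) k) PB QB)"

end

theory Submission
  imports Defs
begin


definition dm :: "(real \<times> real) list \<Rightarrow> real measure" where
  "dm xs = distr (measure_pmf (pmf_of_list xs)) borel (\<lambda>x. x)"

definition okl :: "(real \<times> real) list \<Rightarrow> bool" where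
  "okl xs \<longleftrightarrow> pmf_of_list_wf xs \<and> distinct (map fst xs)"

lemma dm_sets[simp]: "sets (dm xs) = sets borel"
  by (simp add: dm_def)
lemma dm_space[simp]: "space (dm xs) = UNIV"
  by (simp add: dm_def)
lemma dm_meas: "measurable (dm a) (dm b) = borel_measurable borel"
  by (rule measurable_cong_sets) simp_all
lemma dm_meas1: "measurable (dm a) N = measurable borel N"
  by (rule measurable_cong_sets) simp_all

lemma dm_prob: "okl xs \<Longrightarrow> prob_space (dm xs)"
  unfolding dm_def by (intro measure_pmf.prob_space_distr) auto

lemma pmf_okl: assumes "okl xs" "z \<in> set xs" shows "pmf (pmf_of_list xs) (fst z) = snd z"
proof -
  have d: "distinct (map fst xs)" using assms by (simp add: okl_def)
  obtain ys zs where xs: "xs = ys @ z # zs" using split_list[OF assms(2)] by blast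
  have "fst z \<notin> fst ` set ys" "fst z \<notin> fst ` set zs" using d unfolding xs by auto
  then have "filter (\<lambda>y. fst y = fst z) ys = []" "filter (\<lambda>y. fst y = fst z) zs = []"
    by (auto simp: filter_empty_conv) (metis fst_conv image_eqI)+
  then have "filter (\<lambda>y. fst y = fst z) xs = [z]" unfolding xs by simp
  then show ?thesis using assms by (simp add: pmf_pmf_of_list okl_def)
qed

lemma sum_okl:
  fixes g :: "real \<Rightarrow> 'b::comm_semiring_1"
  assumes "okl xs"
  shows "(\<Sum>a\<in>set (map fst xs). g a * h (pmf (pmf_of_list xs) a)) = (\<Sum>(x,w)\<leftarrow>xs. g x * h w)"
proof -
  have d: "distinct (map fst xs)" using assms by (simp add: okl_def)
  then have dx: "distinct xs" by (simp add: distinct_map)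
  have inj: "inj_on fst (set xs)" using d by (simp add: distinct_map)
  have "(\<Sum>a\<in>set (map fst xs). g a * h (pmf (pmf_of_list xs) a)) = (\<Sum>z\<in>set xs. g (fst z) * h (pmf (pmf_of_list xs) (fst z)))"
    by (simp add: sum.reindex[OF inj])
  also have "\<dots> = (\<Sum>z\<in>set xs. g (fst z) * h (snd z))"
    using pmf_okl[OF assms] by simp
  also have "\<dots> = (\<Sum>z\<leftarrow>xs. g (fst z) * h (snd z))"
    using dx by (simp add: sum_list_distinct_conv_sum_set)
  finally show ?thesis by (simp add: case_prod_unfold)
qed

lemma nn_integral_dm:
  assumes "okl xs" and [measurable]: "f \<in> borel_measurable borel"
  shows "(\<integral>\<^sup>+x. f x \<partial>dm xs) = (\<Sum>(x,w)\<leftarrow>xs. f x * ennreal w)"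
proof -
  have wf: "pmf_of_list_wf xs" using assms by (simp add: okl_def)
  have "(\<integral>\<^sup>+x. f x \<partial>dm xs) = (\<integral>\<^sup>+x. f x \<partial>measure_pmf (pmf_of_list xs))"
    unfolding dm_def by (subst nn_integral_distr) auto
  also have "\<dots> = (\<Sum>a\<in>set (map fst xs). f a * ennreal (pmf (pmf_of_list xs) a))"
  proof (rule nn_integral_measure_pmf_support)
    fix x assume "x \<in> set_pmf (pmf_of_list xs)" "x \<notin> set (map fst xs)"
    then show "f x = 0" using set_pmf_of_list[OF wf] by blast
  qed simp_all
  also have "\<dots> = (\<Sum>(x,w)\<leftarrow>xs. f x * ennreal w)"
    by (rule sum_okl[OF assms(1)])
  finally show ?thesis .
qed

lemma integral_dm:
  fixes f :: "real \<Rightarrow> real"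
  assumes "okl xs" and [measurable]: "f \<in> borel_measurable borel"
  shows "(\<integral>x. f x \<partial>dm xs) = (\<Sum>(x,w)\<leftarrow>xs. f x * w)"
proof -
  have wf: "pmf_of_list_wf xs" using assms by (simp add: okl_def)
  have "(\<integral>x. f x \<partial>dm xs) = (\<integral>x. f x \<partial>measure_pmf (pmf_of_list xs))"
    unfolding dm_def by (subst integral_distr) auto
  also have "\<dots> = (\<Sum>a\<in>set (map fst xs). f a * (pmf (pmf_of_list xs) a))"
  proof (rule integral_measure_pmf_real)
    fix x assume "x \<in> set_pmf (pmf_of_list xs)" "f x \<noteq> 0"
    then show "x \<in> set (map fst xs)" using set_pmf_of_list[OF wf] by blast
  qed simp
  also have "\<dots> = (\<Sum>(x,w)\<leftarrow>xs. f x * w)"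
    using sum_okl[OF assms(1), of f "\<lambda>x. x"] by simp
  finally show ?thesis .
qed

lemma emeasure_dm:
  assumes "okl xs" "A \<in> sets borel"
  shows "emeasure (dm xs) A = (\<Sum>(x,w)\<leftarrow>xs. indicator A x * ennreal w)"
proof -
  have "emeasure (dm xs) A = (\<integral>\<^sup>+x. indicator A x \<partial>dm xs)"
    using assms(2) by (subst nn_integral_indicator) auto
  also have "\<dots> = (\<Sum>(x,w)\<leftarrow>xs. indicator A x * ennreal w)"
    by (rule nn_integral_dm[OF assms(1)]) (rule borel_measurable_indicator[OF assms(2)])
  finally show ?thesis .
qed


lemma sum_list_ennreal:
  "(\<And>z. z \<in> set xs \<Longrightarrow> 0 \<le> g z) \<Longrightarrow> (\<Sum>z\<leftarrow>xs. ennreal (g z)) = ennreal (\<Sum>z\<leftarrow>xs. g z)"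
proof (induction xs)
  case (Cons a xs)
  have "0 \<le> (\<Sum>z\<leftarrow>xs. g z)" using Cons.prems by (intro sum_list_nonneg) auto
  then show ?case using Cons by (simp add: ennreal_plus)
qed simp

lemma okl_nonneg: "okl xs \<Longrightarrow> z \<in> set xs \<Longrightarrow> 0 \<le> snd z"
  unfolding okl_def pmf_of_list_wf_def by auto

lemma emeasure_dm_real:
  assumes "okl xs" "A \<in> sets borel"
  shows "emeasure (dm xs) A = ennreal (\<Sum>(x,w)\<leftarrow>xs. indicator A x * w)"
proof -
  have "emeasure (dm xs) A = (\<Sum>(x,w)\<leftarrow>xs. indicator A x * ennreal w)"
    by (rule emeasure_dm[OF assms])
  also have "\<dots> = (\<Sum>z\<leftarrow>xs. ennreal (indicator A (fst z) * snd z))"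
    by (intro arg_cong[where f=sum_list] map_cong refl)
       (auto simp: case_prod_unfold ennreal_mult'' okl_nonneg[OF assms(1)] ennreal_indicator)
  also have "\<dots> = ennreal (\<Sum>z\<leftarrow>xs. indicator A (fst z) * snd z)"
    by (rule sum_list_ennreal) (auto simp: okl_nonneg[OF assms(1)])
  finally show ?thesis by (simp add: case_prod_unfold)
qed

lemma nn_integral_dm_real:
  assumes "okl xs" "f \<in> borel_measurable borel" "\<And>x. 0 \<le> f x"
  shows "(\<integral>\<^sup>+x. ennreal (f x) \<partial>dm xs) = ennreal (\<Sum>(x,w)\<leftarrow>xs. f x * w)"
proof -
  have "(\<integral>\<^sup>+x. ennreal (f x) \<partial>dm xs) = (\<Sum>(x,w)\<leftarrow>xs. ennreal (f x) * ennreal w)"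
    by (rule nn_integral_dm[OF assms(1)]) (use assms(2) in measurable)
  also have "\<dots> = (\<Sum>z\<leftarrow>xs. ennreal (f (fst z) * snd z))"
    by (intro arg_cong[where f=sum_list] map_cong refl)
       (auto simp: case_prod_unfold ennreal_mult'' okl_nonneg[OF assms(1)])
  also have "\<dots> = ennreal (\<Sum>z\<leftarrow>xs. f (fst z) * snd z)"
    by (rule sum_list_ennreal) (auto simp: okl_nonneg[OF assms(1)] assms(3))
  finally show ?thesis by (simp add: case_prod_unfold)
qed

lemma sum_list_nonneg_okl:
  assumes "okl xs" "\<And>x. 0 \<le> f x" shows "0 \<le> (\<Sum>(x,w)\<leftarrow>xs. f x * w)"
  using assms by (intro sum_list_nonneg) (auto simp: case_prod_unfold intro!: mult_nonneg_nonneg dest: okl_nonneg[OF assms(1)])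

lemma pim2:
  fixes M :: "nat \<Rightarrow> real measure"
  assumes ok: "okl ws" "okl l0" "okl l1"
  and M0: "M 0 = dm l0" and M1: "M 1 = dm l1" and Mp: "\<And>j. prob_space (M j)"
  and f0[measurable]: "f0 \<in> borel_measurable borel" and f1[measurable]: "f1 \<in> borel_measurable borel"
  and ident: "\<And>X0 X1. (\<Sum>(x,w)\<leftarrow>ws. indicator X0 (f0 x) * indicator X1 (f1 x) * w) =
      (\<Sum>(x,w)\<leftarrow>l0. indicator X0 x * w) * (\<Sum>(x,w)\<leftarrow>l1. indicator X1 x * w)"
  shows "distr (dm ws) (PiM {..1} M) (\<lambda>x. \<lambda>j\<in>{..1}. if j = 0 then f0 x else f1 x) = PiM {..1} M"
proof -
  interpret product_sigma_finite M
    unfolding product_sigma_finite_def using Mp prob_space_imp_sigma_finite by blast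
  have Fm: "(\<lambda>x. \<lambda>j\<in>{..1::nat}. if j = 0 then f0 x else f1 x) \<in> dm ws \<rightarrow>\<^sub>M PiM {..1} M"
  proof (rule measurable_restrict)
    fix j :: nat assume "j \<in> {..1}"
    then have "j = 0 \<or> j = 1" by auto
    then show "(\<lambda>x. if j = 0 then f0 x else f1 x) \<in> dm ws \<rightarrow>\<^sub>M M j"
    proof
      assume j: "j = 0" show ?thesis unfolding j M0 dm_meas using f0 by simp
    next
      assume j: "j = 1" show ?thesis unfolding j M1 dm_meas using f1 by simp
    qed
  qed
  show ?thesis
  proof (rule PiM_eqI)
    fix X assume X: "\<And>i. i \<in> {..1} \<Longrightarrow> X i \<in> sets (M i)"
    have X0: "X 0 \<in> sets borel" using X[of 0] unfolding M0 by simp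
    have X1: "X 1 \<in> sets borel" using X[of 1] unfolding M1 by simp
    have PE: "Pi\<^sub>E {..1} X \<in> sets (PiM {..1} M)" using X by (intro sets_PiM_I_finite) auto
    have pre: "(\<lambda>x. \<lambda>j\<in>{..1::nat}. if j = 0 then f0 x else f1 x) -` Pi\<^sub>E {..1} X
        = {x. f0 x \<in> X 0 \<and> f1 x \<in> X 1}"
      by (auto simp: PiE_iff atMost_Suc)
    have pres: "{x. f0 x \<in> X 0 \<and> f1 x \<in> X 1} \<in> sets borel"
      using measurable_sets[OF Fm PE] pre by simp
    have "emeasure (distr (dm ws) (PiM {..1} M) (\<lambda>x. \<lambda>j\<in>{..1::nat}. if j = 0 then f0 x else f1 x)) (Pi\<^sub>E {..1} X)
       = emeasure (dm ws) {x. f0 x \<in> X 0 \<and> f1 x \<in> X 1}"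
      by (subst emeasure_distr[OF Fm PE]) (simp only: dm_space Int_UNIV_right pre)
    also have "\<dots> = ennreal (\<Sum>(x,w)\<leftarrow>ws. indicator {x. f0 x \<in> X 0 \<and> f1 x \<in> X 1} x * w)"
      by (rule emeasure_dm_real[OF ok(1) pres])
    also have "\<dots> = ennreal (\<Sum>(x,w)\<leftarrow>ws. indicator (X 0) (f0 x) * indicator (X 1) (f1 x) * w)"
      by (intro arg_cong[where f=ennreal] arg_cong[where f=sum_list] map_cong refl)
         (auto simp: indicator_def)
    also have "\<dots> = ennreal ((\<Sum>(x,w)\<leftarrow>l0. indicator (X 0) x * w) * (\<Sum>(x,w)\<leftarrow>l1. indicator (X 1) x * w))"
      by (simp add: ident)
    also have "\<dots> = emeasure (M 0) (X 0) * emeasure (M 1) (X 1)"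
      unfolding M0 M1 emeasure_dm_real[OF ok(2) X0] emeasure_dm_real[OF ok(3) X1]
      by (rule ennreal_mult'') (rule sum_list_nonneg_okl[OF ok(3)], simp)
    also have "\<dots> = (\<Prod>i\<in>{..1}. emeasure (M i) (X i))"
      by (simp add: atMost_Suc mult.commute)
    finally show "emeasure (distr (dm ws) (PiM {..1} M) (\<lambda>x. \<lambda>j\<in>{..1::nat}. if j = 0 then f0 x else f1 x)) (Pi\<^sub>E {..1} X)
       = (\<Prod>i\<in>{..1}. emeasure (M i) (X i))" .
  qed simp_all
qed

lemma pim1:
  fixes M :: "nat \<Rightarrow> real measure"
  assumes ok: "okl ws" "okl l0"
  and M0: "M 0 = dm l0" and Mp: "\<And>j. prob_space (M j)"
  and f0[measurable]: "f0 \<in> borel_measurable borel"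
  and ident: "\<And>X0. (\<Sum>(x,w)\<leftarrow>ws. indicator X0 (f0 x) * w) = (\<Sum>(x,w)\<leftarrow>l0. indicator X0 x * w)"
  shows "distr (dm ws) (PiM {..0} M) (\<lambda>x. \<lambda>j\<in>{..0}. f0 x) = PiM {..0} M"
proof -
  interpret product_sigma_finite M
    unfolding product_sigma_finite_def using Mp prob_space_imp_sigma_finite by blast
  have Fm: "(\<lambda>x. \<lambda>j\<in>{..0::nat}. f0 x) \<in> dm ws \<rightarrow>\<^sub>M PiM {..0} M"
  proof (rule measurable_restrict)
    fix j :: nat assume "j \<in> {..0}"
    then have j: "j = 0" by simp
    show "(\<lambda>x. f0 x) \<in> dm ws \<rightarrow>\<^sub>M M j"
      unfolding j M0 dm_meas using f0 by simp
  qed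
  show ?thesis
  proof (rule PiM_eqI)
    fix X assume X: "\<And>i. i \<in> {..0} \<Longrightarrow> X i \<in> sets (M i)"
    have X0: "X 0 \<in> sets borel" using X[of 0] unfolding M0 by simp
    have PE: "Pi\<^sub>E {..0} X \<in> sets (PiM {..0} M)" using X by (intro sets_PiM_I_finite) auto
    have pre: "(\<lambda>x. \<lambda>j\<in>{..0::nat}. f0 x) -` Pi\<^sub>E {..0} X = {x. f0 x \<in> X 0}"
    proof (rule set_eqI)
      fix x
      have "(\<lambda>j\<in>{..0::nat}. f0 x) \<in> Pi\<^sub>E {..0} X \<longleftrightarrow> (\<forall>i\<in>{..0::nat}. f0 x \<in> X i)" by (rule restrict_PiE_iff)
      also have "\<dots> \<longleftrightarrow> f0 x \<in> X 0" by simp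
      finally show "x \<in> (\<lambda>x. \<lambda>j\<in>{..0::nat}. f0 x) -` Pi\<^sub>E {..0} X \<longleftrightarrow> x \<in> {x. f0 x \<in> X 0}" by simp
    qed
    have pres: "{x. f0 x \<in> X 0} \<in> sets borel"
      using measurable_sets[OF Fm PE] pre by simp
    have "emeasure (distr (dm ws) (PiM {..0} M) (\<lambda>x. \<lambda>j\<in>{..0::nat}. f0 x)) (Pi\<^sub>E {..0} X)
       = emeasure (dm ws) {x. f0 x \<in> X 0}"
      by (subst emeasure_distr[OF Fm PE]) (simp only: dm_space Int_UNIV_right pre)
    also have "\<dots> = ennreal (\<Sum>(x,w)\<leftarrow>ws. indicator {x. f0 x \<in> X 0} x * w)"
      by (rule emeasure_dm_real[OF ok(1) pres])
    also have "\<dots> = ennreal (\<Sum>(x,w)\<leftarrow>ws. indicator (X 0) (f0 x) * w)"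
      by (intro arg_cong[where f=ennreal] arg_cong[where f=sum_list] map_cong refl)
         (auto simp: indicator_def)
    also have "\<dots> = emeasure (M 0) (X 0)"
      unfolding M0 emeasure_dm_real[OF ok(2) X0] by (simp add: ident)
    also have "\<dots> = (\<Prod>i\<in>{..0}. emeasure (M i) (X i))"
      by simp
    finally show "emeasure (distr (dm ws) (PiM {..0} M) (\<lambda>x. \<lambda>j\<in>{..0::nat}. f0 x)) (Pi\<^sub>E {..0} X)
       = (\<Prod>i\<in>{..0}. emeasure (M i) (X i))" .
  qed simp_all
qed

lemma blackwell_from_map:
  fixes PB QB :: "real measure"
  assumes F: "F \<in> PB \<rightarrow>\<^sub>M P" and sPB: "sets QB = sets PB" and sQ: "sets Q = sets P"
    and ne: "space PB \<noteq> {}"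
    and eP: "distr PB P F = P" and eQ: "distr QB Q F = Q"
  shows "blackwell_le P Q PB QB"
  unfolding blackwell_le_def
proof (intro bexI conjI)
  show "(\<lambda>x. return P (F x)) \<in> PB \<rightarrow>\<^sub>M prob_algebra P"
    using measurable_compose[OF F measurable_return_prob_space] .
  show "P = PB \<bind> (\<lambda>x. return P (F x))"
    by (simp only: bind_return_distr'[OF ne F] eP)
  have F': "F \<in> QB \<rightarrow>\<^sub>M P" unfolding measurable_cong_sets[OF sPB refl] by (rule F)
  have ne': "space QB \<noteq> {}" using ne sets_eq_imp_space_eq[OF sPB] by simp
  have "QB \<bind> (\<lambda>x. return P (F x)) = distr QB P F"
    by (rule bind_return_distr'[OF ne' F'])
  also have "\<dots> = distr QB Q F" by (rule distr_cong) (simp_all add: sQ)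
  also have "\<dots> = Q" by (rule eQ)
  finally show "Q = QB \<bind> (\<lambda>x. return P (F x))" by simp
qed



lemma tradeoff_eqI:
  assumes lower: "\<And>\<phi>. \<phi> \<in> borel_measurable borel \<Longrightarrow> (\<And>x. 0 \<le> \<phi> x) \<Longrightarrow> (\<And>x. \<phi> x \<le> 1) \<Longrightarrow>
        (\<integral>x. \<phi> x \<partial>dm p) \<le> \<alpha> \<Longrightarrow> v \<le> (\<integral>x. 1 - \<phi> x \<partial>dm q)"
  and m0: "\<psi> \<in> borel_measurable borel" and b0: "\<And>x. 0 \<le> \<psi> x" "\<And>x. \<psi> x \<le> 1"
  and i0: "(\<integral>x. \<psi> x \<partial>dm p) \<le> \<alpha>" "(\<integral>x. 1 - \<psi> x \<partial>dm q) = v"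
  shows "tradeoff (dm p) (dm q) \<alpha> = v"
  unfolding tradeoff_def
proof (rule cInf_eq_minimum)
  show "v \<in> {\<beta>. \<exists>\<phi>\<in>borel_measurable (dm p). (\<forall>\<omega>\<in>space (dm p). 0 \<le> \<phi> \<omega> \<and> \<phi> \<omega> \<le> 1) \<and>
        (\<integral>\<omega>. \<phi> \<omega> \<partial>dm p) \<le> \<alpha> \<and> \<beta> = (\<integral>\<omega>. 1 - \<phi> \<omega> \<partial>dm q)}"
    using m0 b0 i0 unfolding dm_meas1 by auto
next
  fix x assume "x \<in> {\<beta>. \<exists>\<phi>\<in>borel_measurable (dm p). (\<forall>\<omega>\<in>space (dm p). 0 \<le> \<phi> \<omega> \<and> \<phi> \<omega> \<le> 1) \<and>
        (\<integral>\<omega>. \<phi> \<omega> \<partial>dm p) \<le> \<alpha> \<and> \<beta> = (\<integral>\<omega>. 1 - \<phi> \<omega> \<partial>dm q)}"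
  then obtain \<phi> where "\<phi> \<in> borel_measurable borel" "\<And>x. 0 \<le> \<phi> x" "\<And>x. \<phi> x \<le> 1"
      "(\<integral>\<omega>. \<phi> \<omega> \<partial>dm p) \<le> \<alpha>" "x = (\<integral>\<omega>. 1 - \<phi> \<omega> \<partial>dm q)"
    unfolding dm_meas1 by auto
  then show "v \<le> x" using lower by metis
qed

definition "l0 d = (if d then [(0::real,2/3::real),(1,1/3)] else [(0,1/3),(1,2/3)])"
definition "ltv d = (if d then [(0::real,1/3::real),(1,2/3)] else [(1,2/3),(2,1/3)])"
definition "lrr d = (if d then [(0::real,3/4::real),(1,1/4)] else [(0,1/4),(1,3/4)])"
definition "lid = [(0::real,1::real)]"

lemma okl_all: "okl (l0 d)" "okl (ltv d)" "okl (lrr d)" "okl lid"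
  by (cases d; simp add: okl_def pmf_of_list_wf_def l0_def ltv_def lrr_def lid_def)+

lemma if_meas[measurable]: "(\<lambda>x::real. if x = c then a else b) \<in> borel_measurable borel"
  by measurable

lemma fed: "0 < c \<Longrightarrow> f_eps_delta (ln c) d \<alpha> = max 0 (max (1 - d - c*\<alpha>) ((1 - d - \<alpha>)/c))"
  unfolding f_eps_delta_def exp_minus by (simp add: divide_inverse mult.commute)

lemma fed0: "f_eps_delta 0 d \<alpha> = max 0 (1 - d - \<alpha>)"
  unfolding f_eps_delta_def by simp

lemma tr_l0:
  assumes "\<alpha> \<in> {0..1}"
  shows "tradeoff (dm (l0 True)) (dm (l0 False)) \<alpha> = f_eps_delta (ln 2) 0 \<alpha>"
proof (rule tradeoff_eqI[where \<psi> = "\<lambda>x. if x = 1 then min 1 (3*\<alpha>) else max 0 ((\<alpha> - 1/3) * 3/(3 - 1))"])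
  fix \<phi> :: "real \<Rightarrow> real"
  assume m: "\<phi> \<in> borel_measurable borel" and b: "\<And>x. 0 \<le> \<phi> x" "\<And>x. \<phi> x \<le> 1"
    and c: "(\<integral>x. \<phi> x \<partial>dm (l0 True)) \<le> \<alpha>"
  have m': "(\<lambda>x. 1 - \<phi> x) \<in> borel_measurable borel" using m by measurable
  have c': "\<phi> 0 * (2/3) + \<phi> 1 * (1/3) \<le> \<alpha>" using c unfolding integral_dm[OF okl_all(1) m] by (simp add: l0_def)
  have e: "(\<integral>x. 1 - \<phi> x \<partial>dm (l0 False)) = 1 - \<phi> 0 * (1/3) - \<phi> 1 * (2/3)"
    unfolding integral_dm[OF okl_all(1) m'] by (simp add: l0_def field_simps)
  have b0: "0 \<le> \<phi> 0" "\<phi> 0 \<le> 1" "0 \<le> \<phi> 1" "\<phi> 1 \<le> 1" using b by auto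
  show "f_eps_delta (ln 2) 0 \<alpha> \<le> (\<integral>x. 1 - \<phi> x \<partial>dm (l0 False))"
    unfolding e fed[of 2, OF zero_less_numeral] diff_divide_distrib using c' b0 by (intro max.boundedI) linarith+
next
  show "(\<lambda>x::real. if x = 1 then min 1 (3*\<alpha>) else max 0 ((\<alpha> - 1/3) * 3/(3 - 1))) \<in> borel_measurable borel" by measurable
  show "\<And>x::real. 0 \<le> (if x = 1 then min 1 (3*\<alpha>) else max 0 ((\<alpha> - 1/3) * 3/(3 - 1)))" using assms by auto
  show "\<And>x::real. (if x = 1 then min 1 (3*\<alpha>) else max 0 ((\<alpha> - 1/3) * 3/(3 - 1))) \<le> 1" using assms by auto
  show "(\<integral>x. (if x = 1 then min 1 (3*\<alpha>) else max 0 ((\<alpha> - 1/3) * 3/(3 - 1))) \<partial>dm (l0 True)) \<le> \<alpha>"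
    unfolding integral_dm[OF okl_all(1) if_meas] using assms by (auto simp: l0_def min_def max_def field_simps)
  have m': "(\<lambda>x::real. 1 - (if x = 1 then min 1 (3*\<alpha>) else max 0 ((\<alpha> - 1/3) * 3/(3 - 1)))) \<in> borel_measurable borel"
    by measurable
  show "(\<integral>x. 1 - (if x = 1 then min 1 (3*\<alpha>) else max 0 ((\<alpha> - 1/3) * 3/(3 - 1))) \<partial>dm (l0 False)) = f_eps_delta (ln 2) 0 \<alpha>"
    unfolding integral_dm[OF okl_all(1) m'] fed[of 2, OF zero_less_numeral] using assms
    by (auto simp: l0_def min_def max_def field_simps)
qed

lemma tr_rr:
  assumes "\<alpha> \<in> {0..1}"
  shows "tradeoff (dm (lrr True)) (dm (lrr False)) \<alpha> = f_eps_delta (ln 3) 0 \<alpha>"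
proof (rule tradeoff_eqI[where \<psi> = "\<lambda>x. if x = 1 then min 1 (4*\<alpha>) else max 0 ((\<alpha> - 1/4) * 4/(4 - 1))"])
  fix \<phi> :: "real \<Rightarrow> real"
  assume m: "\<phi> \<in> borel_measurable borel" and b: "\<And>x. 0 \<le> \<phi> x" "\<And>x. \<phi> x \<le> 1"
    and c: "(\<integral>x. \<phi> x \<partial>dm (lrr True)) \<le> \<alpha>"
  have m': "(\<lambda>x. 1 - \<phi> x) \<in> borel_measurable borel" using m by measurable
  have c': "\<phi> 0 * (3/4) + \<phi> 1 * (1/4) \<le> \<alpha>" using c unfolding integral_dm[OF okl_all(3) m] by (simp add: lrr_def)
  have e: "(\<integral>x. 1 - \<phi> x \<partial>dm (lrr False)) = 1 - \<phi> 0 * (1/4) - \<phi> 1 * (3/4)"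
    unfolding integral_dm[OF okl_all(3) m'] by (simp add: lrr_def field_simps)
  have b0: "0 \<le> \<phi> 0" "\<phi> 0 \<le> 1" "0 \<le> \<phi> 1" "\<phi> 1 \<le> 1" using b by auto
  show "f_eps_delta (ln 3) 0 \<alpha> \<le> (\<integral>x. 1 - \<phi> x \<partial>dm (lrr False))"
    unfolding e fed[of 3, OF zero_less_numeral] diff_divide_distrib using c' b0 by (intro max.boundedI) linarith+
next
  show "(\<lambda>x::real. if x = 1 then min 1 (4*\<alpha>) else max 0 ((\<alpha> - 1/4) * 4/(4 - 1))) \<in> borel_measurable borel" by measurable
  show "\<And>x::real. 0 \<le> (if x = 1 then min 1 (4*\<alpha>) else max 0 ((\<alpha> - 1/4) * 4/(4 - 1)))" using assms by auto
  show "\<And>x::real. (if x = 1 then min 1 (4*\<alpha>) else max 0 ((\<alpha> - 1/4) * 4/(4 - 1))) \<le> 1" using assms by auto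
  show "(\<integral>x. (if x = 1 then min 1 (4*\<alpha>) else max 0 ((\<alpha> - 1/4) * 4/(4 - 1))) \<partial>dm (lrr True)) \<le> \<alpha>"
    unfolding integral_dm[OF okl_all(3) if_meas] using assms by (auto simp: lrr_def min_def max_def field_simps)
  have m': "(\<lambda>x::real. 1 - (if x = 1 then min 1 (4*\<alpha>) else max 0 ((\<alpha> - 1/4) * 4/(4 - 1)))) \<in> borel_measurable borel"
    by measurable
  show "(\<integral>x. 1 - (if x = 1 then min 1 (4*\<alpha>) else max 0 ((\<alpha> - 1/4) * 4/(4 - 1))) \<partial>dm (lrr False)) = f_eps_delta (ln 3) 0 \<alpha>"
    unfolding integral_dm[OF okl_all(3) m'] fed[of 3, OF zero_less_numeral] using assms
    by (auto simp: lrr_def min_def max_def field_simps)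
qed

lemma tr_tv:
  assumes "\<alpha> \<in> {0..1}"
  shows "tradeoff (dm (ltv True)) (dm (ltv False)) \<alpha> = f_eps_delta 0 (1/3) \<alpha>"
proof (rule tradeoff_eqI[where \<psi> = "\<lambda>x. if x = 2 then 1 else if x = 1 then min 1 (3*\<alpha>/2) else 0"])
  fix \<phi> :: "real \<Rightarrow> real"
  assume m: "\<phi> \<in> borel_measurable borel" and b: "\<And>x. 0 \<le> \<phi> x" "\<And>x. \<phi> x \<le> 1"
    and c: "(\<integral>x. \<phi> x \<partial>dm (ltv True)) \<le> \<alpha>"
  have m': "(\<lambda>x. 1 - \<phi> x) \<in> borel_measurable borel" using m by measurable
  have c': "\<phi> 0 * (1/3) + \<phi> 1 * (2/3) \<le> \<alpha>" using c unfolding integral_dm[OF okl_all(2) m] by (simp add: ltv_def)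
  have e: "(\<integral>x. 1 - \<phi> x \<partial>dm (ltv False)) = 1 - \<phi> 1 * (2/3) - \<phi> 2 * (1/3)"
    unfolding integral_dm[OF okl_all(2) m'] by (simp add: ltv_def field_simps)
  have b0: "0 \<le> \<phi> 0" "\<phi> 0 \<le> 1" "0 \<le> \<phi> 1" "\<phi> 1 \<le> 1" "0 \<le> \<phi> 2" "\<phi> 2 \<le> 1" using b by auto
  show "f_eps_delta 0 (1/3) \<alpha> \<le> (\<integral>x. 1 - \<phi> x \<partial>dm (ltv False))"
    unfolding e fed0 using c' b0 by (intro max.boundedI) linarith+
next
  have mm: "(\<lambda>x::real. if x = 2 then 1 else if x = 1 then min 1 (3*\<alpha>/2) else 0) \<in> borel_measurable borel"
    by measurable
  then show "(\<lambda>x::real. if x = 2 then 1 else if x = 1 then min 1 (3*\<alpha>/2) else 0) \<in> borel_measurable borel" .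
  show "\<And>x. 0 \<le> (if x = 2 then 1 else if x = 1 then min 1 (3*\<alpha>/2) else (0::real))" using assms by auto
  show "\<And>x. (if x = 2 then 1 else if x = 1 then min 1 (3*\<alpha>/2) else (0::real)) \<le> 1" using assms by auto
  show "(\<integral>x. (if x = 2 then 1 else if x = 1 then min 1 (3*\<alpha>/2) else 0) \<partial>dm (ltv True)) \<le> \<alpha>"
    unfolding integral_dm[OF okl_all(2) mm] using assms by (auto simp: ltv_def min_def)
  have m': "(\<lambda>x::real. 1 - (if x = 2 then 1 else if x = 1 then min 1 (3*\<alpha>/2) else 0)) \<in> borel_measurable borel"
    by measurable
  show "(\<integral>x. 1 - (if x = 2 then 1 else if x = 1 then min 1 (3*\<alpha>/2) else 0) \<partial>dm (ltv False)) = f_eps_delta 0 (1/3) \<alpha>"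
    unfolding integral_dm[OF okl_all(2) m'] fed0 using assms
    by (auto simp: ltv_def min_def max_def)
qed

lemma tr_id:
  assumes "\<alpha> \<in> {0..1}"
  shows "tradeoff (dm lid) (dm lid) \<alpha> = f_eps_delta 0 0 \<alpha>"
proof (rule tradeoff_eqI[where \<psi> = "\<lambda>x. \<alpha>"])
  fix \<phi> :: "real \<Rightarrow> real"
  assume m: "\<phi> \<in> borel_measurable borel" and b: "\<And>x. 0 \<le> \<phi> x" "\<And>x. \<phi> x \<le> 1"
    and c: "(\<integral>x. \<phi> x \<partial>dm lid) \<le> \<alpha>"
  have m': "(\<lambda>x. 1 - \<phi> x) \<in> borel_measurable borel" using m by measurable
  have c': "\<phi> 0 \<le> \<alpha>" using c unfolding integral_dm[OF okl_all(4) m] by (simp add: lid_def)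
  have e: "(\<integral>x. 1 - \<phi> x \<partial>dm lid) = 1 - \<phi> 0"
    unfolding integral_dm[OF okl_all(4) m'] by (simp add: lid_def)
  have b0: "0 \<le> \<phi> 0" "\<phi> 0 \<le> 1" using b by auto
  show "f_eps_delta 0 0 \<alpha> \<le> (\<integral>x. 1 - \<phi> x \<partial>dm lid)"
    unfolding e fed0 using c' b0 by (intro max.boundedI) linarith+
next
  show "(\<lambda>x::real. \<alpha>) \<in> borel_measurable borel" by simp
  show "\<And>x. 0 \<le> \<alpha>" "\<And>x. \<alpha> \<le> 1" using assms by auto
  have pr: "measure (dm lid) UNIV = 1" using prob_space.prob_space[OF dm_prob[OF okl_all(4)]] by simp
  show "(\<integral>x. \<alpha> \<partial>dm lid) \<le> \<alpha>"
    using pr by simp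
  show "(\<integral>x. 1 - \<alpha> \<partial>dm lid) = f_eps_delta 0 0 \<alpha>"
    using pr assms unfolding fed0 by simp
qed



lemma hs_meas_upd0: "(\<lambda>y::real. (\<lambda>_. undefined)(0:=y)) \<in> borel \<rightarrow>\<^sub>M history_space 1"
proof -
  have "(\<lambda>y::real. (\<lambda>_::nat. undefined)(0:=y)) \<in> (\<lambda>_. borel) 0 \<rightarrow>\<^sub>M PiM (insert 0 {}) (\<lambda>_::nat. borel)"
    by (rule measurable_component_update) auto
  moreover have "insert 0 {} = {..<1::nat}" by auto
  ultimately show ?thesis unfolding history_space_def by simp
qed

lemma hs_meas_add: "(\<lambda>(f, y). f(i := y)) \<in> history_space i \<Otimes>\<^sub>M borel \<rightarrow>\<^sub>M history_space (Suc i)"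
proof -
  have "(\<lambda>(f, y). f(i := y)) \<in> PiM {..<i} (\<lambda>_::nat. borel::real measure) \<Otimes>\<^sub>M (\<lambda>_. borel) i \<rightarrow>\<^sub>M PiM (insert i {..<i}) (\<lambda>_. borel)"
    by (rule measurable_add_dim)
  then show ?thesis unfolding history_space_def lessThan_Suc by simp
qed

lemma hs_upd_meas: "h \<in> space (history_space i) \<Longrightarrow> (\<lambda>y::real. h(i:=y)) \<in> borel \<rightarrow>\<^sub>M history_space (Suc i)"
proof -
  assume h: "h \<in> space (history_space i)"
  have "(\<lambda>y::real. h(i:=y)) \<in> (\<lambda>_. borel) i \<rightarrow>\<^sub>M PiM (insert i {..<i}) (\<lambda>_::nat. borel)"
    by (rule measurable_component_update) (use h in \<open>auto simp: history_space_def\<close>)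
  then show ?thesis unfolding history_space_def lessThan_Suc by simp
qed

lemma K_meas:
  assumes A: "A \<in> history_space i \<rightarrow>\<^sub>M prob_algebra borel"
  shows "(\<lambda>h. A h \<bind> (\<lambda>y. return (history_space (Suc i)) (h(i:=y)))) \<in> history_space i \<rightarrow>\<^sub>M subprob_algebra (history_space (Suc i))"
proof (rule measurable_bind')
  show "A \<in> history_space i \<rightarrow>\<^sub>M subprob_algebra borel" using measurable_prob_algebraD[OF A] .
  have "(\<lambda>(h, y). h(i:=y)) \<in> history_space i \<Otimes>\<^sub>M borel \<rightarrow>\<^sub>M history_space (Suc i)" by (rule hs_meas_add)
  from measurable_compose[OF this return_measurable]
  show "(\<lambda>(h, y). return (history_space (Suc i)) (h(i:=y))) \<in> history_space i \<Otimes>\<^sub>M borel \<rightarrow>\<^sub>M subprob_algebra (history_space (Suc i))"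
    by (simp add: case_prod_unfold)
qed

lemma joint1_eq:
  assumes A0: "\<And>h. A 0 h = dm l" and ok: "okl l"
  shows "joint A 1 = distr (dm l) (history_space 1) (\<lambda>y. (\<lambda>_. undefined)(0:=y))"
proof -
  have sp0: "space (history_space 0) = {\<lambda>_. undefined}" by (simp add: history_space_def space_PiM)
  have m: "(\<lambda>h. A 0 h \<bind> (\<lambda>y. return (history_space 1) (h(0:=y)))) \<in> history_space 0 \<rightarrow>\<^sub>M subprob_algebra (history_space 1)"
  proof -
    have "(\<lambda>h. dm l \<bind> (\<lambda>y. return (history_space (Suc 0)) (h(0:=y)))) \<in> history_space 0 \<rightarrow>\<^sub>M subprob_algebra (history_space (Suc 0))"
      by (rule K_meas[of "\<lambda>h. dm l" 0, simplified]) (use dm_prob[OF ok] in \<open>auto simp: space_prob_algebra\<close>)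
    then show ?thesis by (simp add: A0)
  qed
  have "joint A 1 = return (history_space 0) (\<lambda>_. undefined) \<bind> (\<lambda>h. A 0 h \<bind> (\<lambda>y. return (history_space 1) (h(0:=y))))"
    by (simp add: One_nat_def)
  also have "\<dots> = A 0 (\<lambda>_. undefined) \<bind> (\<lambda>y. return (history_space 1) ((\<lambda>_. undefined)(0:=y)))"
    by (rule bind_return[OF m]) (simp add: sp0)
  also have "\<dots> = distr (dm l) (history_space 1) (\<lambda>y. (\<lambda>_. undefined)(0:=y))"
    unfolding A0 using hs_meas_upd0 by (intro bind_return_distr') (simp_all add: dm_meas1)
  finally show ?thesis .
qed

lemma joint2_eq:
  assumes A0: "\<And>h. A 0 h = dm l" and ok: "okl l"
    and A1: "A 1 \<in> history_space 1 \<rightarrow>\<^sub>M prob_algebra borel"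
    and S: "S \<in> sets (history_space 2)"
  shows "emeasure (joint A 2) S = (\<Sum>(y,w)\<leftarrow>l. emeasure (A 1 ((\<lambda>_. undefined)(0:=y)))
            ((\<lambda>z. (\<lambda>_. undefined)(0:=y, 1:=z)) -` S \<inter> space (A 1 ((\<lambda>_. undefined)(0:=y)))) * ennreal w)"
proof -
  define K where "K h = A 1 h \<bind> (\<lambda>y. return (history_space 2) (h(1:=y)))" for h
  have Km: "K \<in> history_space 1 \<rightarrow>\<^sub>M subprob_algebra (history_space 2)"
    unfolding K_def using K_meas[OF A1] by (simp add: numeral_2_eq_2)
  have j2: "joint A 2 = joint A 1 \<bind> K"
    by (simp add: numeral_2_eq_2 K_def[abs_def])
  have ne: "space (joint A 1) \<noteq> {}"
    unfolding joint1_eq[of A l, OF A0 ok] by (simp add: history_space_def)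
  have Sm: "S \<in> sets (history_space 2)" by (rule S)
  have u1: "(\<lambda>y. (\<lambda>_. undefined)(0:=y)) \<in> dm l \<rightarrow>\<^sub>M history_space 1"
    using hs_meas_upd0 unfolding dm_meas1 .
  have em1: "(\<lambda>h. emeasure (K h) S) \<in> borel_measurable (history_space 1)"
    using measurable_compose[OF Km measurable_emeasure_subprob_algebra[OF Sm]] .
  have "emeasure (joint A 2) S = (\<integral>\<^sup>+h. emeasure (K h) S \<partial>joint A 1)"
    unfolding j2
  proof (rule emeasure_bind[OF ne _ Sm])
    have sj: "sets (joint A 1) = sets (history_space 1)" unfolding joint1_eq[of A l, OF A0 ok] by simp
    show "K \<in> joint A 1 \<rightarrow>\<^sub>M subprob_algebra (history_space 2)"
      by (subst measurable_cong_sets[OF sj refl]) (rule Km)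
  qed
  also have "\<dots> = (\<integral>\<^sup>+y. emeasure (K ((\<lambda>_. undefined)(0:=y))) S \<partial>dm l)"
    unfolding joint1_eq[of A l, OF A0 ok]
    by (rule nn_integral_distr[OF u1]) (unfold measurable_cong_sets[OF sets_distr refl], rule em1)
  also have "\<dots> = (\<Sum>(y,w)\<leftarrow>l. emeasure (K ((\<lambda>_. undefined)(0:=y))) S * ennreal w)"
    by (rule nn_integral_dm[OF ok]) (rule measurable_compose[OF hs_meas_upd0 measurable_compose[OF Km measurable_emeasure_subprob_algebra[OF Sm]]])
  also have "\<dots> = (\<Sum>(y,w)\<leftarrow>l. emeasure (A 1 ((\<lambda>_. undefined)(0:=y)))
            ((\<lambda>z. (\<lambda>_. undefined)(0:=y, 1:=z)) -` S \<inter> space (A 1 ((\<lambda>_. undefined)(0:=y)))) * ennreal w)"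
  proof (intro arg_cong[where f=sum_list] map_cong refl, clarify)
    fix y w :: real
    let ?h = "(\<lambda>_::nat. undefined::real)(0:=y)"
    have h: "?h \<in> space (history_space 1)"
      using measurable_space[OF hs_meas_upd0, of y] by simp
    have pA: "A 1 ?h \<in> space (prob_algebra borel)" using measurable_space[OF A1 h] .
    then have sA: "sets (A 1 ?h) = sets borel" and pA': "prob_space (A 1 ?h)"
      by (auto simp: space_prob_algebra)
    have neA: "space (A 1 ?h) \<noteq> {}" using prob_space.not_empty[OF pA'] .
    have um: "(\<lambda>z. ?h(1:=z)) \<in> A 1 ?h \<rightarrow>\<^sub>M history_space 2"
      unfolding measurable_cong_sets[OF sA refl] using hs_upd_meas[OF h] by (simp add: numeral_2_eq_2)
    have Keq: "K ?h = distr (A 1 ?h) (history_space 2) (\<lambda>z. ?h(1:=z))"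
      unfolding K_def by (rule bind_return_distr'[OF neA um])
    have "emeasure (K ?h) S = emeasure (A 1 ?h) ((\<lambda>z. ?h(1:=z)) -` S \<inter> space (A 1 ?h))"
      unfolding Keq by (rule emeasure_distr[OF um Sm])
    then show "emeasure (K ?h) S * ennreal w = emeasure (A 1 ?h) ((\<lambda>z. ?h(1:=z)) -` S \<inter> space (A 1 ?h)) * ennreal w"
      by (rule arg_cong[where f="\<lambda>x. x * ennreal w"])
  qed
  finally show ?thesis .
qed

lemma bw_set:
  assumes bw: "blackwell_le P Q (dm wp) (dm wq)" and S: "S \<in> sets P" and ok: "okl wp" "okl wq"
  shows "\<exists>g. (\<forall>x. 0 \<le> g x \<and> g x \<le> 1) \<and> emeasure P S = ennreal (\<Sum>(x,w)\<leftarrow>wp. g x * w)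
           \<and> emeasure Q S = ennreal (\<Sum>(x,w)\<leftarrow>wq. g x * w)"
proof -
  obtain K where K: "K \<in> dm wp \<rightarrow>\<^sub>M prob_algebra P" and eP: "P = dm wp \<bind> K" and eQ: "Q = dm wq \<bind> K"
    using bw unfolding blackwell_le_def by blast
  have Kb: "K \<in> borel \<rightarrow>\<^sub>M prob_algebra P" using K by (simp add: dm_meas1)
  have Kx: "\<And>x. K x \<in> space (prob_algebra P)" using measurable_space[OF Kb] by simp
  then have Kp: "\<And>x. prob_space (K x)" and Ks: "\<And>x. sets (K x) = sets P"
    by (auto simp: space_prob_algebra)
  define g where "g x = measure (K x) S" for x
  have eg: "\<And>x. emeasure (K x) S = ennreal (g x)"
    unfolding g_def by (rule finite_measure.emeasure_eq_measure[OF prob_space.finite_measure[OF Kp]])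
  have gb: "\<And>x. 0 \<le> g x \<and> g x \<le> 1"
    unfolding g_def using prob_space.prob_le_1[OF Kp] by simp
  have Ksub: "K \<in> borel \<rightarrow>\<^sub>M subprob_algebra P" using measurable_prob_algebraD[OF Kb] .
  have em: "(\<lambda>x. emeasure (K x) S) \<in> borel_measurable borel"
    using measurable_compose[OF Ksub measurable_emeasure_subprob_algebra[OF S]] .
  have gm: "g \<in> borel_measurable borel"
  proof -
    have "(\<lambda>x. enn2real (emeasure (K x) S)) \<in> borel_measurable borel" using em by measurable
    then show ?thesis unfolding g_def measure_def .
  qed
  have int: "emeasure (dm ws \<bind> K) S = ennreal (\<Sum>(x,w)\<leftarrow>ws. g x * w)" if "okl ws" for ws
  proof -
    have "emeasure (dm ws \<bind> K) S = (\<integral>\<^sup>+x. emeasure (K x) S \<partial>dm ws)"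
      by (rule emeasure_bind[where N=P]) (simp_all add: dm_meas1 Ksub S)
    also have "\<dots> = (\<integral>\<^sup>+x. ennreal (g x) \<partial>dm ws)" by (simp add: eg)
    also have "\<dots> = ennreal (\<Sum>(x,w)\<leftarrow>ws. g x * w)"
      by (rule nn_integral_dm_real[OF that gm]) (use gb in auto)
    finally show ?thesis .
  qed
  show ?thesis using gb int[OF ok(1)] int[OF ok(2)] eP eQ by metis
qed



definition "wsP = [(0::real, 2/9::real), (1,1/9), (2,1/6), (3,1/18), (4,2/9), (5,1/9), (6,1/36), (7,1/12), (8,0), (9,0)]"
definition "wsQ = [(0::real,0::real),(1,0),(2,1/12),(3,1/36),(4,1/9),(5,2/9),(6,1/18),(7,1/6),(8,1/9),(9,2/9)]"
definition "tv0 = (indicator {1,5,6,7,9} :: real \<Rightarrow> real)"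
definition "tv1 x = (indicator {2,3,4,5,6,7} x + 2 * indicator {8,9} (x::real) :: real)"
definition "rr0 = (indicator {4,6,7,8,9} :: real \<Rightarrow> real)"
definition "rr1 = (indicator {3,5,7,8,9} :: real \<Rightarrow> real)"

lemma okl_ws: "okl wsP" "okl wsQ"
  by (simp_all add: okl_def pmf_of_list_wf_def wsP_def wsQ_def)

lemma fin_borel: "finite (S::real set) \<Longrightarrow> S \<in> sets borel"
  by (simp add: borel_closed finite_imp_closed)

lemma maps_meas: "tv0 \<in> borel_measurable borel" "tv1 \<in> borel_measurable borel"
   "rr0 \<in> borel_measurable borel" "rr1 \<in> borel_measurable borel" "(\<lambda>x::real. 0::real) \<in> borel_measurable borel"
proof -
  have s: "{1,5,6,7,9::real} \<in> sets borel" "{2,3,4,5,6,7::real} \<in> sets borel" "{8,9::real} \<in> sets borel"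
    "{4,6,7,8,9::real} \<in> sets borel" "{3,5,7,8,9::real} \<in> sets borel"
    by (simp_all add: fin_borel)
  show "tv0 \<in> borel_measurable borel" unfolding tv0_def using s by measurable
  show "tv1 \<in> borel_measurable borel" unfolding tv1_def[abs_def] using s by measurable
  show "rr0 \<in> borel_measurable borel" unfolding rr0_def using s by measurable
  show "rr1 \<in> borel_measurable borel" unfolding rr1_def using s by measurable
qed simp

lemma id_tvT: "(\<Sum>(x,w)\<leftarrow>wsP. indicator X0 (tv0 x) * indicator X1 (tv1 x) * w) =
   (\<Sum>(x,w)\<leftarrow>l0 True. indicator X0 x * w) * (\<Sum>(x,w)\<leftarrow>ltv True. indicator X1 x * w)"
  by (simp add: wsP_def wsQ_def l0_def ltv_def lrr_def lid_def tv0_def tv1_def rr0_def rr1_def algebra_simps)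

lemma id_tvF: "(\<Sum>(x,w)\<leftarrow>wsQ. indicator X0 (tv0 x) * indicator X1 (tv1 x) * w) =
   (\<Sum>(x,w)\<leftarrow>l0 False. indicator X0 x * w) * (\<Sum>(x,w)\<leftarrow>ltv False. indicator X1 x * w)"
  by (simp add: wsP_def wsQ_def l0_def ltv_def lrr_def lid_def tv0_def tv1_def rr0_def rr1_def algebra_simps)

lemma id_rrT: "(\<Sum>(x,w)\<leftarrow>wsP. indicator X0 (rr0 x) * indicator X1 (rr1 x) * w) =
   (\<Sum>(x,w)\<leftarrow>l0 True. indicator X0 x * w) * (\<Sum>(x,w)\<leftarrow>lrr True. indicator X1 x * w)"
  by (simp add: wsP_def wsQ_def l0_def ltv_def lrr_def lid_def tv0_def tv1_def rr0_def rr1_def algebra_simps)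

lemma id_rrF: "(\<Sum>(x,w)\<leftarrow>wsQ. indicator X0 (rr0 x) * indicator X1 (rr1 x) * w) =
   (\<Sum>(x,w)\<leftarrow>l0 False. indicator X0 x * w) * (\<Sum>(x,w)\<leftarrow>lrr False. indicator X1 x * w)"
  by (simp add: wsP_def wsQ_def l0_def ltv_def lrr_def lid_def tv0_def tv1_def rr0_def rr1_def algebra_simps)

lemma id_idT: "(\<Sum>(x,w)\<leftarrow>wsP. indicator X0 (tv0 x) * indicator X1 ((\<lambda>x. 0) x) * w) =
   (\<Sum>(x,w)\<leftarrow>l0 True. indicator X0 x * w) * (\<Sum>(x,w)\<leftarrow>lid. indicator X1 x * w)"
  by (simp add: wsP_def wsQ_def l0_def ltv_def lrr_def lid_def tv0_def tv1_def rr0_def rr1_def algebra_simps)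

lemma id_idF: "(\<Sum>(x,w)\<leftarrow>wsQ. indicator X0 (tv0 x) * indicator X1 ((\<lambda>x. 0) x) * w) =
   (\<Sum>(x,w)\<leftarrow>l0 False. indicator X0 x * w) * (\<Sum>(x,w)\<leftarrow>lid. indicator X1 x * w)"
  by (simp add: wsP_def wsQ_def l0_def ltv_def lrr_def lid_def tv0_def tv1_def rr0_def rr1_def algebra_simps)

lemma id_0T: "(\<Sum>(x,w)\<leftarrow>wsP. indicator X0 (tv0 x) * w) = (\<Sum>(x,w)\<leftarrow>l0 True. indicator X0 x * w)"
  by (simp add: wsP_def l0_def tv0_def algebra_simps)
lemma id_0F: "(\<Sum>(x,w)\<leftarrow>wsQ. indicator X0 (tv0 x) * w) = (\<Sum>(x,w)\<leftarrow>l0 False. indicator X0 x * w)"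
  by (simp add: wsQ_def l0_def tv0_def algebra_simps)



lemma meas_F2:
  assumes M0: "M 0 = dm la" and M1: "M 1 = dm lb"
  and f0: "f0 \<in> borel_measurable borel" and f1: "f1 \<in> borel_measurable borel"
  shows "(\<lambda>x. \<lambda>j\<in>{..1::nat}. if j = 0 then f0 x else f1 x) \<in> dm ws \<rightarrow>\<^sub>M PiM {..1} M"
proof (rule measurable_restrict)
  fix j :: nat assume "j \<in> {..1}"
  then have "j = 0 \<or> j = 1" by auto
  then show "(\<lambda>x. if j = 0 then f0 x else f1 x) \<in> dm ws \<rightarrow>\<^sub>M M j"
  proof
    assume j: "j = 0" show ?thesis unfolding j M0 dm_meas using f0 by simp
  next
    assume j: "j = 1" show ?thesis unfolding j M1 dm_meas using f1 by simp
  qed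
qed

lemma meas_F1:
  assumes M0: "M 0 = dm la" and f0: "f0 \<in> borel_measurable borel"
  shows "(\<lambda>x. \<lambda>j\<in>{..0::nat}. f0 x) \<in> dm ws \<rightarrow>\<^sub>M PiM {..0} M"
proof (rule measurable_restrict)
  fix j :: nat assume "j \<in> {..0}"
  then have j: "j = 0" by simp
  show "(\<lambda>x. f0 x) \<in> dm ws \<rightarrow>\<^sub>M M j"
    unfolding j M0 dm_meas using f0 by simp
qed

lemma bw2:
  fixes MT MF :: "nat \<Rightarrow> real measure"
  assumes ok: "okl lT" "okl lF" "okl mT" "okl mF"
  and M: "MT 0 = dm lT" "MT 1 = dm mT" "MF 0 = dm lF" "MF 1 = dm mF"
  and pr: "\<And>j. prob_space (MT j)" "\<And>j. prob_space (MF j)"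
  and ss: "\<And>j. sets (MT j) = sets borel" "\<And>j. sets (MF j) = sets borel"
  and fa: "fa \<in> borel_measurable borel" and fb: "fb \<in> borel_measurable borel"
  and idT: "\<And>X0 X1. (\<Sum>(x,w)\<leftarrow>wsP. indicator X0 (fa x) * indicator X1 (fb x) * w) =
      (\<Sum>(x,w)\<leftarrow>lT. indicator X0 x * w) * (\<Sum>(x,w)\<leftarrow>mT. indicator X1 x * w)"
  and idF: "\<And>X0 X1. (\<Sum>(x,w)\<leftarrow>wsQ. indicator X0 (fa x) * indicator X1 (fb x) * w) =
      (\<Sum>(x,w)\<leftarrow>lF. indicator X0 x * w) * (\<Sum>(x,w)\<leftarrow>mF. indicator X1 x * w)"
  shows "blackwell_le (PiM {..1} MT) (PiM {..1} MF) (dm wsP) (dm wsQ)"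
proof (rule blackwell_from_map)
  show "(\<lambda>x. \<lambda>j\<in>{..1::nat}. if j = 0 then fa x else fb x) \<in> dm wsP \<rightarrow>\<^sub>M PiM {..1} MT"
    by (rule meas_F2[where M=MT, OF M(1,2) fa fb])
  show "sets (dm wsQ) = sets (dm wsP)" by simp
  show "sets (PiM {..1} MF) = sets (PiM {..1} MT)"
    by (rule sets_PiM_cong) (simp_all add: ss)
  show "space (dm wsP) \<noteq> {}" by simp
  show "distr (dm wsP) (PiM {..1} MT) (\<lambda>x. \<lambda>j\<in>{..1::nat}. if j = 0 then fa x else fb x) = PiM {..1} MT"
    by (rule pim2[where M=MT, OF okl_ws(1) ok(1) ok(3) M(1,2) pr(1) fa fb idT])
  show "distr (dm wsQ) (PiM {..1} MF) (\<lambda>x. \<lambda>j\<in>{..1::nat}. if j = 0 then fa x else fb x) = PiM {..1} MF"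
    by (rule pim2[where M=MF, OF okl_ws(2) ok(2) ok(4) M(3,4) pr(2) fa fb idF])
qed

lemma bw1:
  fixes MT MF :: "nat \<Rightarrow> real measure"
  assumes ok: "okl lT" "okl lF"
  and M: "MT 0 = dm lT" "MF 0 = dm lF"
  and pr: "\<And>j. prob_space (MT j)" "\<And>j. prob_space (MF j)"
  and ss: "\<And>j. sets (MT j) = sets borel" "\<And>j. sets (MF j) = sets borel"
  and fa: "fa \<in> borel_measurable borel"
  and idT: "\<And>X0. (\<Sum>(x,w)\<leftarrow>wsP. indicator X0 (fa x) * w) = (\<Sum>(x,w)\<leftarrow>lT. indicator X0 x * w)"
  and idF: "\<And>X0. (\<Sum>(x,w)\<leftarrow>wsQ. indicator X0 (fa x) * w) = (\<Sum>(x,w)\<leftarrow>lF. indicator X0 x * w)"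
  shows "blackwell_le (PiM {..0} MT) (PiM {..0} MF) (dm wsP) (dm wsQ)"
proof (rule blackwell_from_map)
  show "(\<lambda>x. \<lambda>j\<in>{..0::nat}. fa x) \<in> dm wsP \<rightarrow>\<^sub>M PiM {..0} MT"
    by (rule meas_F1[where M=MT, OF M(1) fa])
  show "sets (dm wsQ) = sets (dm wsP)" by simp
  show "sets (PiM {..0} MF) = sets (PiM {..0} MT)"
    by (rule sets_PiM_cong) (simp_all add: ss)
  show "space (dm wsP) \<noteq> {}" by simp
  show "distr (dm wsP) (PiM {..0} MT) (\<lambda>x. \<lambda>j\<in>{..0::nat}. fa x) = PiM {..0} MT"
    by (rule pim1[where M=MT, OF okl_ws(1) ok(1) M(1) pr(1) fa idT])
  show "distr (dm wsQ) (PiM {..0} MF) (\<lambda>x. \<lambda>j\<in>{..0::nat}. fa x) = PiM {..0} MF"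
    by (rule pim1[where M=MF, OF okl_ws(2) ok(2) M(2) pr(2) fa idF])
qed

definition Adv :: "bool \<Rightarrow> nat \<Rightarrow> (nat \<Rightarrow> real) \<Rightarrow> real measure" where
  "Adv d i h = (if i = 0 then dm (l0 d) else if h 0 = 0 then dm (ltv d) else if h 0 = 1 then dm (lrr d) else dm lid)"

lemma Adv_prob: "prob_space (Adv d i h)"
  unfolding Adv_def by (simp add: dm_prob okl_all)

lemma Adv_sets: "sets (Adv d i h) = sets borel"
  unfolding Adv_def by simp

lemma dm_pa: "okl xs \<Longrightarrow> dm xs \<in> space (prob_algebra borel)"
  by (simp add: space_prob_algebra dm_prob)

lemma comp_set: "j < i \<Longrightarrow> {h \<in> space (history_space i). h j = c} \<in> sets (history_space i)"
proof -
  assume j: "j < i"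
  have m: "(\<lambda>h. h j) \<in> history_space i \<rightarrow>\<^sub>M (borel :: real measure)"
    unfolding history_space_def by (rule measurable_component_singleton) (use j in auto)
  have "(\<lambda>h. h j) -` {c} \<inter> space (history_space i) \<in> sets (history_space i)"
    by (rule measurable_sets[OF m]) simp
  moreover have "(\<lambda>h. h j) -` {c} \<inter> space (history_space i) = {h \<in> space (history_space i). h j = c}"
    by auto
  ultimately show ?thesis by simp
qed

lemma Adv_meas: "Adv d i \<in> history_space i \<rightarrow>\<^sub>M prob_algebra borel"
proof (cases "i = 0")
  case True
  then show ?thesis unfolding Adv_def by (simp add: dm_pa okl_all)
next
  case False
  then have i: "0 < i" by simp
  have "(\<lambda>h. if h 0 = 0 then dm (ltv d) else if h 0 = 1 then dm (lrr d) else dm lid) \<in> history_space i \<rightarrow>\<^sub>M prob_algebra borel"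
    by (intro measurable_If measurable_const comp_set[OF i] dm_pa okl_all)
  then show ?thesis unfolding Adv_def using False by simp
qed



lemma sets_joint2:
  assumes A0: "\<And>h. A 0 h = dm l" and ok: "okl l"
    and A1: "A 1 \<in> history_space 1 \<rightarrow>\<^sub>M prob_algebra borel"
  shows "sets (joint A 2) = sets (history_space 2)"
proof -
  define K where "K h = A 1 h \<bind> (\<lambda>y. return (history_space 2) (h(1:=y)))" for h
  have Km: "K \<in> history_space 1 \<rightarrow>\<^sub>M subprob_algebra (history_space 2)"
    unfolding K_def using K_meas[OF A1] by (simp add: numeral_2_eq_2)
  have j2: "joint A 2 = joint A 1 \<bind> K"
    by (simp add: numeral_2_eq_2 K_def[abs_def])
  have ne: "space (joint A 1) \<noteq> {}"
    unfolding joint1_eq[of A l, OF A0 ok] by (simp add: history_space_def)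
  have sj: "sets (joint A 1) = sets (history_space 1)" unfolding joint1_eq[of A l, OF A0 ok] by simp
  have Km': "K \<in> joint A 1 \<rightarrow>\<^sub>M subprob_algebra (history_space 2)"
    by (subst measurable_cong_sets[OF sj refl]) (rule Km)
  show ?thesis unfolding j2 by (rule sets_bind_measurable[OF Km' ne])
qed

lemma LED_Adv: "L_ED (Adv True i h) (Adv False i h)"
proof -
  have l0: "L_ED (dm (l0 True)) (dm (l0 False))"
    unfolding L_ED_def by (intro exI[of _ "ln 2"] exI[of _ 0]) (simp add: tr_l0)
  have tv: "L_ED (dm (ltv True)) (dm (ltv False))"
    unfolding L_ED_def by (intro exI[of _ 0] exI[of _ "1/3"]) (simp add: tr_tv)
  have rr: "L_ED (dm (lrr True)) (dm (lrr False))"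
    unfolding L_ED_def by (intro exI[of _ "ln 3"] exI[of _ 0]) (simp add: tr_rr)
  have idd: "L_ED (dm lid) (dm lid)"
    unfolding L_ED_def by (intro exI[of _ 0] exI[of _ 0]) (simp add: tr_id)
  show ?thesis unfolding Adv_def using l0 tv rr idd by simp
qed

lemma filt: "filter_adversary L_ED (dm wsP) (dm wsQ) 2 Adv"
  unfolding filter_adversary_def
proof (intro conjI allI impI ballI)
  fix d i show "Adv d i \<in> history_space i \<rightarrow>\<^sub>M prob_algebra borel" by (rule Adv_meas)
next
  fix i h show "L_ED (Adv True i h) (Adv False i h)" by (rule LED_Adv)
next
  fix i :: nat and h assume "i < 2" and h: "h \<in> space (history_space i)"
  then have "i = 0 \<or> i = 1" by auto
  then show "blackwell_le (step_prod (Adv True) i h) (step_prod (Adv False) i h) (dm wsP) (dm wsQ)"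
  proof
    assume i: "i = 0"
    show ?thesis unfolding i step_prod_def
      by (rule bw1[where lT="l0 True" and lF="l0 False" and fa=tv0])
         (simp_all add: okl_all Adv_def dm_prob Adv_sets maps_meas id_0T id_0F)
  next
    assume i: "i = 1"
    consider "h 0 = 0" | "h 0 = 1" | "h 0 \<noteq> 0 \<and> h 0 \<noteq> 1" by blast
    then show ?thesis
    proof cases
      case 1
      show ?thesis unfolding i step_prod_def
        by (rule bw2[where lT="l0 True" and lF="l0 False" and mT="ltv True" and mF="ltv False" and fa=tv0 and fb=tv1])
           (simp_all add: okl_all Adv_def dm_prob Adv_sets maps_meas id_tvT id_tvF 1)
    next
      case 2
      show ?thesis unfolding i step_prod_def
        by (rule bw2[where lT="l0 True" and lF="l0 False" and mT="lrr True" and mF="lrr False" and fa=rr0 and fb=rr1])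
           (simp_all add: okl_all Adv_def dm_prob Adv_sets maps_meas id_rrT id_rrF 2)
    next
      case 3
      show ?thesis unfolding i step_prod_def
        by (rule bw2[where lT="l0 True" and lF="l0 False" and mT="lid" and mF="lid" and fa=tv0 and fb="\<lambda>x. 0"])
           (simp_all add: okl_all Adv_def dm_prob Adv_sets maps_meas id_idT id_idF 3)
    qed
  qed
qed



definition "S2 = {h \<in> space (history_space 2). (h 0 = 0 \<and> h 1 = (2::real)) \<or> (h 0 = 1 \<and> h 1 = 1)}"

lemma S2_sets: "S2 \<in> sets (history_space 2)"
proof -
  let ?sp = "space (history_space 2)"
  have eq: "S2 = ({h \<in> ?sp. h 0 = 0} \<inter> {h \<in> ?sp. h 1 = 2}) \<union> ({h \<in> ?sp. h 0 = 1} \<inter> {h \<in> ?sp. h 1 = 1})"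
    unfolding S2_def by auto
  have c0: "{h \<in> ?sp. h 0 = c} \<in> sets (history_space 2)" for c
    by (rule comp_set) simp
  have c1: "{h \<in> ?sp. h 1 = c} \<in> sets (history_space 2)" for c
    by (rule comp_set) simp
  show ?thesis unfolding eq by (intro sets.Un sets.Int c0 c1)
qed

lemma upd_space: "(\<lambda>_. undefined)(0:=a, 1:=b) \<in> space (history_space 2)"
  by (auto simp: history_space_def space_PiM PiE_iff extensional_def)

lemma pre_S2: "(\<lambda>z. (\<lambda>_. undefined)(0:=y, 1:=z)) -` S2 \<inter> UNIV = {z. (y = 0 \<and> z = 2) \<or> (y = 1 \<and> z = 1)}"
  using upd_space[of y] by (auto simp: S2_def)

lemma joint_S2:
  "emeasure (joint (Adv d) 2) S2 = (\<Sum>(y,w)\<leftarrow>l0 d. emeasure (Adv d 1 ((\<lambda>_. undefined)(0:=y)))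
            {z. (y = 0 \<and> z = 2) \<or> (y = 1 \<and> z = 1)} * ennreal w)"
proof -
  have "emeasure (joint (Adv d) 2) S2 = (\<Sum>(y,w)\<leftarrow>l0 d. emeasure (Adv d 1 ((\<lambda>_. undefined)(0:=y)))
            ((\<lambda>z. (\<lambda>_. undefined)(0:=y, 1:=z)) -` S2 \<inter> space (Adv d 1 ((\<lambda>_. undefined)(0:=y)))) * ennreal w)"
    by (rule joint2_eq[where l="l0 d"]) (simp_all add: Adv_def okl_all Adv_meas S2_sets)
  also have "\<dots> = (\<Sum>(y,w)\<leftarrow>l0 d. emeasure (Adv d 1 ((\<lambda>_. undefined)(0:=y)))
            {z. (y = 0 \<and> z = 2) \<or> (y = 1 \<and> z = 1)} * ennreal w)"
    using pre_S2 by (simp add: Adv_def)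
  finally show ?thesis .
qed

lemma em2: "okl xs \<Longrightarrow> emeasure (dm xs) {c} = ennreal (\<Sum>(x,w)\<leftarrow>xs. indicator {c} x * w)"
  by (rule emeasure_dm_real) simp_all

lemma JT: "emeasure (joint (Adv True) 2) S2 = ennreal (1/12)"
proof -
  have a: "emeasure (dm (ltv True)) {2} = 0" using em2[OF okl_all(2), of True 2] by (simp add: ltv_def)
  have b: "emeasure (dm (lrr True)) {1} = ennreal (1/4)" using em2[OF okl_all(3), of True 1] by (simp add: lrr_def)
  show ?thesis unfolding joint_S2 by (simp add: l0_def Adv_def a b ennreal_mult''[symmetric])
qed

lemma JF: "emeasure (joint (Adv False) 2) S2 = ennreal (11/18)"
proof -
  have a: "emeasure (dm (ltv False)) {2} = ennreal (1/3)" using em2[OF okl_all(2), of False 2] by (simp add: ltv_def)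
  have b: "emeasure (dm (lrr False)) {1} = ennreal (3/4)" using em2[OF okl_all(3), of False 1] by (simp add: lrr_def)
  have num: "ennreal (1/9) + inverse 2 = ennreal (11/18)"
    using ennreal_plus[of "1/9" "1/2"] by simp
  show ?thesis unfolding joint_S2 using num by (simp add: l0_def Adv_def a b ennreal_mult''[symmetric])
qed

lemma not_bw: "\<not> blackwell_le (joint (Adv True) 2) (joint (Adv False) 2) (dm wsP) (dm wsQ)"
proof
  assume bw: "blackwell_le (joint (Adv True) 2) (joint (Adv False) 2) (dm wsP) (dm wsQ)"
  have sj: "sets (joint (Adv True) 2) = sets (history_space 2)"
    by (rule sets_joint2[where l="l0 True"]) (simp_all add: Adv_def okl_all Adv_meas)
  have S: "S2 \<in> sets (joint (Adv True) 2)" using S2_sets sj by simp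
  obtain g where g: "\<And>x. 0 \<le> g x \<and> g x \<le> 1"
    and eP: "emeasure (joint (Adv True) 2) S2 = ennreal (\<Sum>(x,w)\<leftarrow>wsP. g x * w)"
    and eQ: "emeasure (joint (Adv False) 2) S2 = ennreal (\<Sum>(x,w)\<leftarrow>wsQ. g x * w)"
    using bw_set[OF bw S okl_ws] by blast
  have nP: "0 \<le> (\<Sum>(x,w)\<leftarrow>wsP. g x * w)" by (rule sum_list_nonneg_okl[OF okl_ws(1)]) (use g in auto)
  have nQ: "0 \<le> (\<Sum>(x,w)\<leftarrow>wsQ. g x * w)" by (rule sum_list_nonneg_okl[OF okl_ws(2)]) (use g in auto)
  have P: "(\<Sum>(x,w)\<leftarrow>wsP. g x * w) = 1/12" using eP JT nP by simp
  have Q: "(\<Sum>(x,w)\<leftarrow>wsQ. g x * w) = 11/18" using eQ JF nQ by simp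
  have P': "g 0 * (2/9) + g 1 * (1/9) + g 2 * (1/6) + g 3 * (1/18) + g 4 * (2/9) + g 5 * (1/9) + g 6 * (1/36) + g 7 * (1/12) = 1/12"
    using P by (simp add: wsP_def)
  have Q': "g 2 * (1/12) + g 3 * (1/36) + g 4 * (1/9) + g 5 * (2/9) + g 6 * (1/18) + g 7 * (1/6) + g 8 * (1/9) + g 9 * (2/9) = 11/18"
    using Q by (simp add: wsQ_def)
  have b: "0 \<le> g 0" "0 \<le> g 1" "0 \<le> g 2" "0 \<le> g 3" "0 \<le> g 4" "0 \<le> g 5" "0 \<le> g 6" "0 \<le> g 7"
    "g 8 \<le> 1" "g 9 \<le> 1" using g by auto
  show False using P' Q' b by linarith
qed

theorem corollary5p1:
  shows "(\<exists>(PB :: real measure) QB k. valid_pair PB QB \<and> k \<ge> 1 \<and>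
            \<not> natural_filter_free L_all PB QB k) \<and>
         (\<exists>(PB :: real measure) QB k. valid_pair PB QB \<and> k \<ge> 1 \<and>
            \<not> natural_filter_free L_ED PB QB k)"
proof -
  have vp: "valid_pair (dm wsP) (dm wsQ)"
    unfolding valid_pair_def by (simp add: dm_prob okl_ws)
  have fa: "filter_adversary L_all (dm wsP) (dm wsQ) 2 Adv"
    using filt unfolding filter_adversary_def L_all_def by simp
  have n1: "\<not> natural_filter_free L_all (dm wsP) (dm wsQ) 2"
    unfolding natural_filter_free_def using fa not_bw by blast
  have n2: "\<not> natural_filter_free L_ED (dm wsP) (dm wsQ) 2"
    unfolding natural_filter_free_def using filt not_bw by blast
  show ?thesis using vp n1 n2 by (intro conjI exI[of _ "dm wsP"] exI[of _ "dm wsQ"] exI[of _ "2::nat"]) simp_all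
qed

end
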